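(* Assume $C(u,v)\equiv C>0$ for $u,v\in\{x,y\}$, $\beta=0$ and $\mu=1$. Then the system $\dot n^x=P(n^x,n^y)$, $\dot n^y=Q(n^x,n^y)$ has no fixed point in $(0,\infty)^2$, and for every initial condition in $(0,\infty)^2$ the solution converges to $(0,r(y)/C)$ if $S(y;x)>0$ and to $(r(x)/C,0)$ if $S(y;x)<0$, where here $S(y;x)=r(y)-r(x)+\alpha(y,x)=-S(x;y)$.
   Context: Let $r(x),r(y)>0$, $\alpha(u,v)=\tau(u,v)-\tau(v,u)$ with $\tau\ge0$, and $$P(u,v)=\Big(r(x)-Cu-Cv+\frac{\alpha(x,y)}{u+v}v\Big)u,\qquad Q(u,v)=\Big(r(y)-Cu-Cv-\frac{\alpha(x,y)}{u+v}u\Big)v.$$ In general the invasion fitness is $S(y;x)=r(y)-\frac{C(y,x)r(x)}{C(x,x)}+\frac{\alpha(y,x)r(x)}{\beta C(x,x)+\mu r(x)}$, which reduces to $r(y)-r(x)+\alpha(y,x)$ in this case. *)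

theory Defs
  imports "HOL-Analysis.Analysis"
begin

definition alpha :: "('a \<Rightarrow> 'a \<Rightarrow> real) \<Rightarrow> 'a \<Rightarrow> 'a \<Rightarrow> real" where
  "alpha tau u v = tau u v - tau v u"

definition invasion_fitness ::
  "('a \<Rightarrow> real) \<Rightarrow> ('a \<Rightarrow> 'a \<Rightarrow> real) \<Rightarrow> ('a \<Rightarrow> 'a \<Rightarrow> real) \<Rightarrow> real \<Rightarrow> real \<Rightarrow> 'a \<Rightarrow> 'a \<Rightarrow> real"
  where
  "invasion_fitness r Cf tau \<beta> \<mu> y x =
     r y - Cf y x * r x / Cf x x + alpha tau y x * r x / (\<beta> * Cf x x + \<mu> * r x)"

definition Pfun :: "('a \<Rightarrow> real) \<Rightarrow> real \<Rightarrow> ('a \<Rightarrow> 'a \<Rightarrow> real) \<Rightarrow> 'a \<Rightarrow> 'a \<Rightarrow> real \<Rightarrow> real \<Rightarrow> real"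
  where
  "Pfun r C tau x y u v = (r x - C * u - C * v + alpha tau x y / (u + v) * v) * u"

definition Qfun :: "('a \<Rightarrow> real) \<Rightarrow> real \<Rightarrow> ('a \<Rightarrow> 'a \<Rightarrow> real) \<Rightarrow> 'a \<Rightarrow> 'a \<Rightarrow> real \<Rightarrow> real \<Rightarrow> real"
  where
  "Qfun r C tau x y u v = (r y - C * u - C * v - alpha tau x y / (u + v) * u) * v"

definition is_solution ::
  "('a \<Rightarrow> real) \<Rightarrow> real \<Rightarrow> ('a \<Rightarrow> 'a \<Rightarrow> real) \<Rightarrow> 'a \<Rightarrow> 'a \<Rightarrow> (real \<Rightarrow> real) \<Rightarrow> (real \<Rightarrow> real) \<Rightarrow> bool"
  where
  "is_solution r C tau x y nx ny \<longleftrightarrow>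
     (\<forall>t\<ge>0. (nx has_real_derivative Pfun r C tau x y (nx t) (ny t)) (at t within {0..}) \<and>
             (ny has_real_derivative Qfun r C tau x y (nx t) (ny t)) (at t within {0..}))"

end

theory Submission
  imports Defs
begin

lemma incr_helper:
  fixes f f' :: "real \<Rightarrow> real"
  assumes "0 \<le> a" "a \<le> b"
    and d: "\<And>t. a \<le> t \<Longrightarrow> t \<le> b \<Longrightarrow> (f has_real_derivative f' t) (at t within {0..})"
    and nn: "\<And>t. a < t \<Longrightarrow> t < b \<Longrightarrow> f' t \<ge> 0"
  shows "f a \<le> f b"
proof (rule DERIV_nonneg_imp_increasing_open[OF assms(2)])
  fix t assume t: "a < t" "t < b"
  have "t \<in> interior {0::real..}" using t assms(1) by simp
  hence "at t within {0..} = at t" by (rule at_within_interior)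
  with d[of t] nn[OF t] t show "\<exists>y. (f has_real_derivative y) (at t) \<and> 0 \<le> y" by auto
next
  show "continuous_on {a..b} f"
    unfolding continuous_on_eq_continuous_within
  proof
    fix t assume t: "t \<in> {a..b}"
    have "continuous (at t within {0..}) f" using d[of t] t by (auto intro: DERIV_continuous)
    thus "continuous (at t within {a..b}) f"
      by (rule continuous_within_subset) (use assms(1) in auto)
  qed
qed

lemma comp_helper:
  fixes e e' :: "real \<Rightarrow> real"
  assumes t0: "0 \<le> t0" and m: "m > 0"
    and d: "\<And>t. t \<ge> t0 \<Longrightarrow> (e has_real_derivative e' t) (at t within {0..})"
    and le: "\<And>t. t \<ge> t0 \<Longrightarrow> e' t \<le> - m * e t + c"
    and t: "t \<ge> t0"
  shows "e t \<le> c/m + (e t0 - c/m) * exp (-m* (t-t0))"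
proof -
  define g where "g = (\<lambda>s. - (e s - c/m) * exp (m * s))"
  have "g t0 \<le> g t"
  proof (rule incr_helper[OF t0 t, where f'="\<lambda>s. - (e' s) * exp (m * s) - (e s - c/m) * (exp (m * s) * m)"])
    fix s assume s: "t0 \<le> s" "s \<le> t"
    show "(g has_real_derivative - (e' s) * exp (m * s) - (e s - c/m) * (exp (m * s) * m)) (at s within {0..})"
      unfolding g_def using d[of s] s
      by (auto intro!: derivative_eq_intros simp: algebra_simps)
  next
    fix s assume s: "t0 < s" "s < t"
    have "e' s + m * e s - c \<le> 0" using le[of s] s by simp
    hence "exp (m * s) * (e' s + m * e s - c) \<le> 0" by (simp add: mult_nonneg_nonpos)
    moreover have "- (e' s) * exp (m * s) - (e s - c/m) * (exp (m * s) * m) = - (exp (m * s) * (e' s + m * e s - c))"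
      using m by (simp add: field_simps)
    ultimately show "0 \<le> - (e' s) * exp (m * s) - (e s - c/m) * (exp (m * s) * m)" by linarith
  qed
  hence "(e t - c/m) * exp (m * t) \<le> (e t0 - c/m) * exp (m * t0)" unfolding g_def by (simp add: algebra_simps)
  hence "(e t - c/m) \<le> (e t0 - c/m) * exp (m * t0) / exp (m * t)"
    by (simp add: pos_le_divide_eq)
  moreover have "exp (m * t0) / exp (m * t) = exp (-m* (t-t0))" by (simp add: exp_diff[symmetric] algebra_simps)
  ultimately have "(e t - c/m) \<le> (e t0 - c/m) * exp (-m* (t-t0))" by (metis times_divide_eq_right)
  thus ?thesis by simp
qed


lemma exp_decay:
  fixes m K t0 :: real
  assumes m: "m > 0"
  shows "((\<lambda>t. K * exp (-m* (t-t0))) \<longlongrightarrow> 0) at_top"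
proof -
  have "filterlim (\<lambda>t. t - t0) at_top at_top"
    using filterlim_tendsto_add_at_top[OF tendsto_const[of "-t0"] filterlim_ident] by simp
  hence "filterlim (\<lambda>t. m * (t - t0)) at_top at_top"
    by (rule filterlim_tendsto_pos_mult_at_top[OF tendsto_const m])
  hence "filterlim (\<lambda>t. - (m * (t - t0))) at_bot at_top"
    by (simp add: filterlim_uminus_at_bot)
  hence "((\<lambda>t. exp (- (m * (t - t0)))) \<longlongrightarrow> 0) at_top"
    by (rule filterlim_compose[OF exp_at_bot])
  hence "((\<lambda>t. K * exp (- (m * (t - t0)))) \<longlongrightarrow> K * 0) at_top"
    by (intro tendsto_mult tendsto_const)
  thus ?thesis by simp
qed

lemma zconv:
  fixes z \<rho> :: "real \<Rightarrow> real" and C L :: real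
  assumes C: "C > 0" and L: "L > 0" and rho: "(\<rho> \<longlongrightarrow> L) at_top"
    and zpos: "\<And>t. t \<ge> 0 \<Longrightarrow> z t > 0"
    and d: "\<And>t. t \<ge> 0 \<Longrightarrow> (z has_real_derivative C - \<rho> t * z t) (at t within {0..})"
  shows "(z \<longlongrightarrow> C / L) at_top"
proof (rule tendstoI)
  fix \<epsilon> :: real assume e: "\<epsilon> > 0"
  define \<eta> where "\<eta> = min (L/2) (\<epsilon>* L^2/(4* C))"
  have eta: "\<eta> > 0" "\<eta> \<le> L/2" "\<eta> \<le> \<epsilon>* L^2/(4* C)" using e L C by (auto simp: \<eta>_def)
  have h1: "C/(L-\<eta>) \<le> C/L + \<epsilon>/2"
  proof -
    have "C/(L-\<eta>) - C/L = C* \<eta>/(L* (L-\<eta>))" using eta L by (simp add: field_simps)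
    also have "\<dots> \<le> C* \<eta>/(L* (L/2))"
      using eta L C by (intro divide_left_mono mult_left_mono mult_pos_pos) auto
    also have "\<dots> = 2* C* \<eta>/L^2" using L by (simp add: field_simps power2_eq_square)
    also have "\<dots> \<le> 2* C* (\<epsilon>* L^2/(4* C))/L^2"
      using eta L C by (intro divide_right_mono mult_left_mono) auto
    also have "\<dots> = \<epsilon>/2" using L C by (simp add: field_simps power2_eq_square)
    finally have "C/(L-\<eta>) - C/L \<le> \<epsilon>/2" .
    thus ?thesis by linarith
  qed
  have h2: "C/L - \<epsilon>/2 \<le> C/(L+\<eta>)"
  proof -
    have "C/L - C/(L+\<eta>) = C* \<eta>/(L* (L+\<eta>))" using eta L by (simp add: field_simps)
    also have "\<dots> \<le> C* \<eta>/(L* L)"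
      using eta L C by (intro divide_left_mono mult_left_mono mult_pos_pos) auto
    also have "\<dots> \<le> C* (\<epsilon>* L^2/(4* C))/(L* L)"
      using eta L C by (intro divide_right_mono mult_left_mono) auto
    also have "\<dots> = \<epsilon>/4" using L C by (simp add: field_simps power2_eq_square)
    finally have "C/L - C/(L+\<eta>) \<le> \<epsilon>/4" .
    thus ?thesis using e by linarith
  qed
  have "\<forall>\<^sub>F t in at_top. dist (\<rho> t) L < \<eta>" using tendstoD[OF rho eta(1)] .
  then obtain t1 where t1: "\<And>t. t \<ge> t1 \<Longrightarrow> \<bar>\<rho> t - L\<bar> < \<eta>"
    by (auto simp: eventually_at_top_linorder dist_real_def)
  define t0 where "t0 = max t1 0"
  have t0: "t0 \<ge> 0" "t0 \<ge> t1" by (auto simp: t0_def)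
  have Lm: "L - \<eta> > 0" "L + \<eta> > 0" using eta L by auto
  have up: "z t \<le> C/(L-\<eta>) + (z t0 - C/(L-\<eta>)) * exp (-(L-\<eta>)* (t-t0))" if "t \<ge> t0" for t
  proof (rule comp_helper[OF t0(1) Lm(1), where e'="\<lambda>t. C - \<rho> t * z t"])
    fix s assume s: "s \<ge> t0"
    show "(z has_real_derivative C - \<rho> s * z s) (at s within {0..})" using d s t0 by auto
    have "(L-\<eta>) * z s \<le> \<rho> s * z s"
      using t1[of s] s t0 zpos[of s] by (intro mult_right_mono) auto
    thus "C - \<rho> s * z s \<le> - (L-\<eta>) * z s + C" by (simp add: algebra_simps)
  qed (use that in auto)
  have lo: "- z t \<le> (-C)/(L+\<eta>) + (- z t0 - (-C)/(L+\<eta>)) * exp (-(L+\<eta>)* (t-t0))" if "t \<ge> t0" for t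
  proof (rule comp_helper[OF t0(1) Lm(2), where e="\<lambda>t. - z t" and e'="\<lambda>t. - (C - \<rho> t * z t)"])
    fix s assume s: "s \<ge> t0"
    show "((\<lambda>t. - z t) has_real_derivative - (C - \<rho> s * z s)) (at s within {0..})"
      using DERIV_minus[OF d[of s]] s t0 by simp
    have "\<rho> s * z s \<le> (L+\<eta>) * z s"
      using t1[of s] s t0 zpos[of s] by (intro mult_right_mono) auto
    thus "- (C - \<rho> s * z s) \<le> - (L+\<eta>) * (- z s) + - C" by (simp add: algebra_simps)
  qed (use that in auto)
  have e2: "\<epsilon>/2 > 0" using e by simp
  have ev1: "\<forall>\<^sub>F t in at_top. \<bar>(z t0 - C/(L-\<eta>)) * exp (-(L-\<eta>)* (t-t0))\<bar> < \<epsilon>/2"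
    using tendstoD[OF exp_decay[OF Lm(1), of "z t0 - C/(L-\<eta>)" t0] e2] by (simp add: dist_real_def)
  have ev2: "\<forall>\<^sub>F t in at_top. \<bar>(- z t0 - (-C)/(L+\<eta>)) * exp (-(L+\<eta>)* (t-t0))\<bar> < \<epsilon>/2"
    using tendstoD[OF exp_decay[OF Lm(2), of "- z t0 - (-C)/(L+\<eta>)" t0] e2] by (simp add: dist_real_def)
  have ev3: "\<forall>\<^sub>F t in at_top. t \<ge> t0" by (rule eventually_ge_at_top)
  show "\<forall>\<^sub>F t in at_top. dist (z t) (C / L) < \<epsilon>"
    using ev1 ev2 ev3
  proof eventually_elim
    case (elim t)
    have a: "z t < C/L + \<epsilon>" using up[OF elim(3)] elim(1) h1 by linarith
    have lo': "- z t \<le> -(C/(L+\<eta>)) + (- z t0 - (-C)/(L+\<eta>)) * exp (-(L+\<eta>)* (t-t0))"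
      using lo[OF elim(3)] by (simp only: minus_divide_left)
    have b: "z t > C/L - \<epsilon>" using lo' elim(2) h2 by linarith
    show ?case using a b by (simp add: dist_real_def abs_less_iff)
  qed
qed


lemma bnd_helper:
  fixes s p q :: real
  assumes "p > 0" "q > 0"
  shows "s/(p+q)* q \<ge> - \<bar>s\<bar>"
proof -
  have "q/(p+q) \<le> 1" using assms by simp
  moreover have "q/(p+q) \<ge> 0" using assms by simp
  ultimately have "\<bar>s\<bar> * (q/(p+q)) \<le> \<bar>s\<bar>" by (metis abs_ge_zero mult_left_le)
  moreover have "\<bar>s/(p+q)* q\<bar> = \<bar>s\<bar> * (q/(p+q))" using assms by (simp add: abs_mult)
  ultimately show ?thesis by linarith
qed

lemma pos_lemma:
  fixes u v :: "real \<Rightarrow> real" and a b s C :: real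
  assumes a: "a > 0" and b: "b > 0" and C: "C > 0"
    and du: "\<And>t. t \<ge> 0 \<Longrightarrow> (u has_real_derivative (a - C* u t - C* v t + s/(u t + v t)* v t)* u t) (at t within {0..})"
    and dv: "\<And>t. t \<ge> 0 \<Longrightarrow> (v has_real_derivative (b - C* u t - C* v t - s/(u t + v t)* u t)* v t) (at t within {0..})"
    and u0: "u 0 > 0" and v0: "v 0 > 0"
  shows "\<forall>t\<ge>0. u t > 0 \<and> v t > 0"
proof (rule ccontr)
  assume "\<not> (\<forall>t\<ge>0. u t > 0 \<and> v t > 0)"
  then obtain t1 where t1: "t1 \<ge> 0" "min (u t1) (v t1) \<le> 0" by auto
  have cu: "continuous_on {0..} u" unfolding continuous_on_eq_continuous_within
    using du by (auto intro: DERIV_continuous)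
  have cv: "continuous_on {0..} v" unfolding continuous_on_eq_continuous_within
    using dv by (auto intro: DERIV_continuous)
  define Z where "Z = {t \<in> {0..t1}. min (u t) (v t) \<le> (\<lambda>_. 0) t}"
  have cm: "continuous_on {0..t1} (\<lambda>t. min (u t) (v t))"
    by (intro continuous_on_min continuous_on_subset[OF cu] continuous_on_subset[OF cv]) auto
  have clZ: "closed Z" unfolding Z_def
    by (rule continuous_on_closed_Collect_le[OF cm continuous_on_const]) simp
  have t1Z: "t1 \<in> Z" using t1 by (simp add: Z_def)
  have bddZ: "bdd_below Z" unfolding Z_def by (rule bdd_belowI[of _ 0]) auto
  define T where "T = Inf Z"
  have TZ: "T \<in> Z" unfolding T_def using closed_contains_Inf[OF _ bddZ clZ] t1Z by auto
  have T0: "T \<ge> 0" "T \<le> t1" using TZ by (auto simp: Z_def)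
  have below: "u t > 0 \<and> v t > 0" if "0 \<le> t" "t < T" for t
  proof (rule ccontr)
    assume "\<not> (u t > 0 \<and> v t > 0)"
    hence "t \<in> Z" using that T0 by (auto simp: Z_def)
    hence "T \<le> t" unfolding T_def using cInf_lower[OF _ bddZ] by auto
    thus False using that by simp
  qed
  have "T \<noteq> 0" using TZ u0 v0 by (auto simp: Z_def)
  with T0 have Tpos: "T > 0" by simp
  have cN: "continuous_on {0..T} (\<lambda>t. u t + v t)"
    by (intro continuous_on_add continuous_on_subset[OF cu] continuous_on_subset[OF cv]) auto
  obtain tm where tm: "tm \<in> {0..T}" "\<And>t. t \<in> {0..T} \<Longrightarrow> u t + v t \<le> u tm + v tm"
    using continuous_attains_sup[OF compact_Icc _ cN] Tpos by fastforce
  define M where "M = u tm + v tm"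
  define K where "K = C* M + \<bar>s\<bar>"
  have uT: "u T > 0"
  proof -
    have "u 0 * exp (K*0) \<le> u T * exp (K* T)"
    proof (rule incr_helper[where f="\<lambda>t. u t * exp (K* t)" and
          f'="\<lambda>t. (a - C* u t - C* v t + s/(u t + v t)* v t)* u t * exp (K* t) + u t * (exp (K* t) * K)"])
      fix t assume t: "0 \<le> t" "t \<le> T"
      show "((\<lambda>t. u t * exp (K* t)) has_real_derivative (a - C* u t - C* v t + s/(u t + v t)* v t)* u t * exp (K* t) + u t * (exp (K* t) * K)) (at t within {0..})"
        using du[of t] t by (auto intro!: derivative_eq_intros)
    next
      fix t assume t: "0 < t" "t < T"
      have p: "u t > 0" "v t > 0" using below[of t] t by auto
      have "u t + v t \<le> M" using tm(2)[of t] t by (simp add: M_def)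
      hence "C* (u t + v t) \<le> C* M" using C by simp
      moreover have "s/(u t+v t)* v t \<ge> - \<bar>s\<bar>" by (rule bnd_helper[OF p])
      ultimately have br: "a - C* u t - C* v t + s/(u t + v t)* v t + K \<ge> 0"
        using a unfolding K_def by (simp add: algebra_simps)
      have "(a - C* u t - C* v t + s/(u t + v t)* v t)* u t * exp (K* t) + u t * (exp (K* t) * K)
          = u t * exp (K* t) * (a - C* u t - C* v t + s/(u t + v t)* v t + K)" by (simp add: algebra_simps)
      also have "\<dots> \<ge> 0" using p br by simp
      finally show "(a - C* u t - C* v t + s/(u t + v t)* v t)* u t * exp (K* t) + u t * (exp (K* t) * K) \<ge> 0" .
    qed (use Tpos in auto)
    hence "u 0 \<le> u T * exp (K* T)" by simp
    with u0 have "u T * exp (K* T) > 0" by linarith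
    thus ?thesis by (simp add: zero_less_mult_iff)
  qed
  have vT: "v T > 0"
  proof -
    have "v 0 * exp (K*0) \<le> v T * exp (K* T)"
    proof (rule incr_helper[where f="\<lambda>t. v t * exp (K* t)" and
          f'="\<lambda>t. (b - C* u t - C* v t - s/(u t + v t)* u t)* v t * exp (K* t) + v t * (exp (K* t) * K)"])
      fix t assume t: "0 \<le> t" "t \<le> T"
      show "((\<lambda>t. v t * exp (K* t)) has_real_derivative (b - C* u t - C* v t - s/(u t + v t)* u t)* v t * exp (K* t) + v t * (exp (K* t) * K)) (at t within {0..})"
        using dv[of t] t by (auto intro!: derivative_eq_intros)
    next
      fix t assume t: "0 < t" "t < T"
      have p: "u t > 0" "v t > 0" using below[of t] t by auto
      have "u t + v t \<le> M" using tm(2)[of t] t by (simp add: M_def)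
      hence "C* (u t + v t) \<le> C* M" using C by simp
      moreover have "(-s)/(v t+u t)* u t \<ge> - \<bar>-s\<bar>" by (rule bnd_helper[OF p(2) p(1)])
      ultimately have br: "b - C* u t - C* v t - s/(u t + v t)* u t + K \<ge> 0"
        using b unfolding K_def by (simp add: algebra_simps)
      have "(b - C* u t - C* v t - s/(u t + v t)* u t)* v t * exp (K* t) + v t * (exp (K* t) * K)
          = v t * exp (K* t) * (b - C* u t - C* v t - s/(u t + v t)* u t + K)" by (simp add: algebra_simps)
      also have "\<dots> \<ge> 0" using p br by simp
      finally show "(b - C* u t - C* v t - s/(u t + v t)* u t)* v t * exp (K* t) + v t * (exp (K* t) * K) \<ge> 0" .
    qed (use Tpos in auto)
    hence "v 0 \<le> v T * exp (K* T)" by simp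
    with v0 have "v T * exp (K* T) > 0" by linarith
    thus ?thesis by (simp add: zero_less_mult_iff)
  qed
  show False using TZ uT vT by (auto simp: Z_def)
qed


lemma alg1:
  fixes U V a b s C :: real
  assumes "U > 0" "V > 0"
  shows "- (((a - C * U - C * V + s/(U + V) * V) * U + (b - C * U - C * V - s/(U + V) * U) * V) * inverse ((U + V) ^ Suc (Suc 0)))
     = C - (b + (a - b) * (U / (U + V))) * (1 / (U + V))"
proof -
  have e1: "(a - C * U - C * V + s/(U + V) * V) * U + (b - C * U - C * V - s/(U + V) * U) * V
      = a * U + b * V - C * (U + V)^2" by (simp add: algebra_simps power2_eq_square)
  define N where "N = U + V"
  have nz: "N \<noteq> 0" using assms by (simp add: N_def)
  have VN: "V = N - U" by (simp add: N_def)
  show ?thesis unfolding e1 N_def[symmetric] unfolding VN using nz by (simp add: field_simps power2_eq_square)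
qed

lemma conv_lemma:
  fixes u v :: "real \<Rightarrow> real" and a b s C :: real
  assumes a: "a > 0" and b: "b > 0" and C: "C > 0"
    and du: "\<And>t. t \<ge> 0 \<Longrightarrow> (u has_real_derivative (a - C * u t - C * v t + s/(u t + v t) * v t) * u t) (at t within {0..})"
    and dv: "\<And>t. t \<ge> 0 \<Longrightarrow> (v has_real_derivative (b - C * u t - C * v t - s/(u t + v t) * u t) * v t) (at t within {0..})"
    and u0: "u 0 > 0" and v0: "v 0 > 0"
    and D: "a - b + s < 0"
  shows "(u \<longlongrightarrow> 0) at_top \<and> (v \<longlongrightarrow> b / C) at_top"
proof -
  have pos: "\<And>t. t \<ge> 0 \<Longrightarrow> u t > 0 \<and> v t > 0"
    using pos_lemma[OF a b C du dv u0 v0] by blast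
  define q where "q t = u t / v t * exp (- (a - b + s) * t)" for t
  have dq: "(q has_real_derivative 0) (at t within {0..})" if t: "t \<ge> 0" for t
  proof -
    have p: "u t > 0" "v t > 0" using pos[OF t] by auto
    show ?thesis unfolding q_def
      using du[OF t] dv[OF t] p
      by (auto intro!: derivative_eq_intros simp: field_simps power2_eq_square)
  qed
  have qc: "q t = q 0" if t: "t \<ge> 0" for t
  proof -
    have "q 0 \<le> q t" by (rule incr_helper[where f'="\<lambda>_. 0"]) (use t dq in auto)
    moreover have "- q 0 \<le> - q t"
      by (rule incr_helper[where f="\<lambda>t. - q t" and f'="\<lambda>_. - 0"]) (use t DERIV_minus[OF dq] in auto)
    ultimately show ?thesis by simp
  qed
  have ratio: "u t / v t = (u 0 / v 0) * exp ((a - b + s) * t)" if t: "t \<ge> 0" for t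
  proof -
    have "u t / v t * exp (- (a - b + s) * t) = u 0 / v 0" using qc[OF t] by (simp add: q_def)
    hence "u t / v t * exp (- (a - b + s) * t) * exp ((a - b + s) * t) = u 0 / v 0 * exp ((a - b + s) * t)" by simp
    moreover have "exp (- (a - b + s) * t) * exp ((a - b + s) * t) = 1" by (simp add: exp_add[symmetric] algebra_simps)
    ultimately show ?thesis by (metis mult.assoc mult.right_neutral)
  qed
  define p where "p t = u t / (u t + v t)" for t
  have pt: "((\<lambda>t. p t) \<longlongrightarrow> 0) at_top"
  proof (rule tendsto_sandwich[where f="\<lambda>_. 0" and h="\<lambda>t. (u 0 / v 0) * exp ((a - b + s)*t)"])
    show "\<forall>\<^sub>F t in at_top. 0 \<le> p t"
      using eventually_ge_at_top[of 0] by eventually_elim (use pos in \<open>force simp: p_def\<close>)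
    show "\<forall>\<^sub>F t in at_top. p t \<le> (u 0 / v 0) * exp ((a - b + s)*t)"
      using eventually_ge_at_top[of 0]
    proof eventually_elim
      case (elim t)
      have pp: "u t > 0" "v t > 0" using pos[OF elim] by auto
      have "p t \<le> u t / v t" unfolding p_def using pp by (intro divide_left_mono) auto
      thus ?case using ratio[OF elim] by simp
    qed
    have "((\<lambda>t. u 0 / v 0 * exp (- (- (a - b + s)) * (t - 0))) \<longlongrightarrow> 0) at_top"
      by (rule exp_decay) (use D in simp)
    thus "((\<lambda>t. u 0 / v 0 * exp ((a - b + s) * t)) \<longlongrightarrow> 0) at_top" by (simp add: algebra_simps)
  qed simp
  define \<rho> where "\<rho> t = b + (a - b) * p t" for t
  have rt: "(\<rho> \<longlongrightarrow> b) at_top"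
  proof -
    have "((\<lambda>t. b + (a - b) * p t) \<longlongrightarrow> b + (a - b) * 0) at_top"
      by (intro tendsto_intros pt)
    thus ?thesis by (simp add: \<rho>_def[abs_def])
  qed
  define z where "z t = 1 / (u t + v t)" for t
  have zpos: "z t > 0" if "t \<ge> 0" for t using pos[OF that] by (simp add: z_def)
  have dz: "(z has_real_derivative C - \<rho> t * z t) (at t within {0..})" if t: "t \<ge> 0" for t
  proof -
    have pp: "u t > 0" "v t > 0" using pos[OF t] by auto
    have dN: "((\<lambda>t. u t + v t) has_real_derivative (a - C * u t - C * v t + s/(u t + v t) * v t) * u t + (b - C * u t - C * v t - s/(u t + v t) * u t) * v t) (at t within {0..})"
      by (rule DERIV_add[OF du[OF t] dv[OF t]])
    have nz: "u t + v t \<noteq> 0" using pp by simp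
    have "((\<lambda>t. inverse (u t + v t)) has_real_derivative - (((a - C * u t - C * v t + s/(u t + v t) * v t) * u t + (b - C * u t - C * v t - s/(u t + v t) * u t) * v t) * inverse ((u t + v t) ^ Suc (Suc 0)))) (at t within {0..})"
      by (rule DERIV_inverse_fun[OF dN nz])
    moreover have "- (((a - C * u t - C * v t + s/(u t + v t) * v t) * u t + (b - C * u t - C * v t - s/(u t + v t) * u t) * v t) * inverse ((u t + v t) ^ Suc (Suc 0)))
       = C - \<rho> t * z t"
      unfolding \<rho>_def p_def z_def by (rule alg1[OF pp])
    ultimately show ?thesis unfolding z_def[abs_def] by (simp add: inverse_eq_divide)
  qed
  have zt: "(z \<longlongrightarrow> C / b) at_top" by (rule zconv[OF C b rt zpos dz])
  have Nt: "((\<lambda>t. 1 / z t) \<longlongrightarrow> 1 / (C / b)) at_top"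
    by (rule tendsto_divide[OF tendsto_const zt]) (use C b in simp)
  have evN: "\<forall>\<^sub>F t in at_top. 1 / z t = u t + v t"
    using eventually_ge_at_top[of 0] by eventually_elim (simp add: z_def)
  have N: "((\<lambda>t. u t + v t) \<longlongrightarrow> b / C) at_top"
    using tendsto_cong[OF evN] Nt by simp
  have evu: "\<forall>\<^sub>F t in at_top. (u t + v t) * p t = u t"
    using eventually_ge_at_top[of 0]
  proof eventually_elim
    case (elim t)
    then have "u t + v t \<noteq> 0" using pos[OF elim] by simp
    thus ?case by (simp add: p_def)
  qed
  have "((\<lambda>t. (u t + v t) * p t) \<longlongrightarrow> b / C * 0) at_top"
    by (rule tendsto_mult[OF N pt])
  hence ut: "(u \<longlongrightarrow> 0) at_top" using tendsto_cong[OF evu] by simp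
  have "((\<lambda>t. (u t + v t) - u t) \<longlongrightarrow> b / C - 0) at_top"
    by (rule tendsto_diff[OF N ut])
  hence "(v \<longlongrightarrow> b / C) at_top" by simp
  with ut show ?thesis by simp
qed

theorem mainTheorem9:
  fixes r :: "'a \<Rightarrow> real" and tau Cf :: "'a \<Rightarrow> 'a \<Rightarrow> real"
    and C \<beta> \<mu> :: real and x y :: 'a
  assumes rpos: "r x > 0" "r y > 0"
    and tau_nonneg: "\<And>u v. tau u v \<ge> 0"
    and Cpos: "C > 0"
    and Cconst: "\<And>u v. u \<in> {x, y} \<Longrightarrow> v \<in> {x, y} \<Longrightarrow> Cf u v = C"
    and beta: "\<beta> = 0" and mu: "\<mu> = 1"
    and Snz: "invasion_fitness r Cf tau \<beta> \<mu> y x \<noteq> 0"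
  shows "invasion_fitness r Cf tau \<beta> \<mu> y x = r y - r x + alpha tau y x
       \<and> invasion_fitness r Cf tau \<beta> \<mu> y x = - invasion_fitness r Cf tau \<beta> \<mu> x y
       \<and> (\<forall>u v. u > 0 \<longrightarrow> v > 0 \<longrightarrow>
              \<not> (Pfun r C tau x y u v = 0 \<and> Qfun r C tau x y u v = 0))
       \<and> (\<forall>nx ny. is_solution r C tau x y nx ny \<longrightarrow> nx 0 > 0 \<longrightarrow> ny 0 > 0 \<longrightarrow>
              (invasion_fitness r Cf tau \<beta> \<mu> y x > 0 \<longrightarrow>
                  (nx \<longlongrightarrow> 0) at_top \<and> (ny \<longlongrightarrow> r y / C) at_top)
            \<and> (invasion_fitness r Cf tau \<beta> \<mu> y x < 0 \<longrightarrow>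
                  (nx \<longlongrightarrow> r x / C) at_top \<and> (ny \<longlongrightarrow> 0) at_top))"

proof -
  let ?S = "invasion_fitness r Cf tau \<beta> \<mu> y x"
  define s where "s = alpha tau x y"
  have Cxx: "Cf x x = C" "Cf y x = C" "Cf y y = C" "Cf x y = C" using Cconst by auto
  have S1: "?S = r y - r x + alpha tau y x"
    unfolding invasion_fitness_def beta mu Cxx using Cpos rpos by simp
  have S2: "invasion_fitness r Cf tau \<beta> \<mu> x y = r x - r y + alpha tau x y"
    unfolding invasion_fitness_def beta mu Cxx using Cpos rpos by simp
  have al: "alpha tau y x = - s" unfolding s_def alpha_def by simp
  have SD: "?S = - (r x - r y + s)" using S1 al by simp
  have part2: "?S = - invasion_fitness r Cf tau \<beta> \<mu> x y" using S1 S2 al s_def by simp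
  have part3: "\<forall>u v. u > 0 \<longrightarrow> v > 0 \<longrightarrow> \<not> (Pfun r C tau x y u v = 0 \<and> Qfun r C tau x y u v = 0)"
  proof (intro allI impI notI)
    fix u v :: real assume u: "u > 0" and v: "v > 0" and PQ: "Pfun r C tau x y u v = 0 \<and> Qfun r C tau x y u v = 0"
    have e1: "r x - C * u - C * v + s / (u + v) * v = 0" using PQ u unfolding Pfun_def s_def by simp
    have e2: "r y - C * u - C * v - s / (u + v) * u = 0" using PQ v unfolding Qfun_def s_def by simp
    have "s / (u + v) * v + s / (u + v) * u = s / (u + v) * (u + v)" by (metis distrib_left add.commute)
    also have "\<dots> = s" using u v by simp
    finally have "s / (u + v) * v + s / (u + v) * u = s" .
    hence "r x - r y + s = 0" using e1 e2 by linarith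
    thus False using Snz SD by simp
  qed
  have part4: "\<forall>nx ny. is_solution r C tau x y nx ny \<longrightarrow> nx 0 > 0 \<longrightarrow> ny 0 > 0 \<longrightarrow>
              (?S > 0 \<longrightarrow> (nx \<longlongrightarrow> 0) at_top \<and> (ny \<longlongrightarrow> r y / C) at_top)
            \<and> (?S < 0 \<longrightarrow> (nx \<longlongrightarrow> r x / C) at_top \<and> (ny \<longlongrightarrow> 0) at_top)"
  proof (intro allI impI conjI)
    fix nx ny :: "real \<Rightarrow> real"
    assume sol: "is_solution r C tau x y nx ny" and n0: "nx 0 > 0" "ny 0 > 0"
    have du: "\<And>t. t \<ge> 0 \<Longrightarrow> (nx has_real_derivative (r x - C * nx t - C * ny t + s/(nx t + ny t) * ny t) * nx t) (at t within {0..})"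
      using sol unfolding is_solution_def Pfun_def s_def by blast
    have dv: "\<And>t. t \<ge> 0 \<Longrightarrow> (ny has_real_derivative (r y - C * nx t - C * ny t - s/(nx t + ny t) * nx t) * ny t) (at t within {0..})"
      using sol unfolding is_solution_def Qfun_def s_def by blast
    {
      assume "?S > 0"
      hence D: "r x - r y + s < 0" using SD by simp
      from conv_lemma[OF rpos(1) rpos(2) Cpos du dv n0 D]
      show "(nx \<longlongrightarrow> 0) at_top" "(ny \<longlongrightarrow> r y / C) at_top" by auto
    next
      assume "?S < 0"
      hence D: "r y - r x + (- s) < 0" using SD by simp
      have dv': "(ny has_real_derivative (r y - C * ny t - C * nx t + (- s)/(ny t + nx t) * nx t) * ny t) (at t within {0..})"
        if "t \<ge> 0" for t
      proof -
        have q: "(- s)/(ny t + nx t) = - (s/(nx t + ny t))" by (simp add: add.commute)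
        have "(r y - C * nx t - C * ny t - s/(nx t + ny t) * nx t) * ny t
            = (r y - C * ny t - C * nx t + (- s)/(ny t + nx t) * nx t) * ny t"
          unfolding q by (simp add: algebra_simps)
        thus ?thesis using dv[OF that] by metis
      qed
      have du': "(nx has_real_derivative (r x - C * ny t - C * nx t - (- s)/(ny t + nx t) * ny t) * nx t) (at t within {0..})"
        if "t \<ge> 0" for t
      proof -
        have q: "(- s)/(ny t + nx t) = - (s/(nx t + ny t))" by (simp add: add.commute)
        have "(r x - C * nx t - C * ny t + s/(nx t + ny t) * ny t) * nx t
            = (r x - C * ny t - C * nx t - (- s)/(ny t + nx t) * ny t) * nx t"
          unfolding q by (simp add: algebra_simps)
        thus ?thesis using du[OF that] by metis
      qed
      from conv_lemma[OF rpos(2) rpos(1) Cpos dv' du' n0(2) n0(1) D]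
      show "(nx \<longlongrightarrow> r x / C) at_top" "(ny \<longlongrightarrow> 0) at_top" by auto
    }
  qed
  show ?thesis using S1 part2 part3 part4 by blast
qed

end
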